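(* Let $p,q\ge1$, $u\in\mathfrak{S}_p$, $v\in\mathfrak{S}_q$. For $w\in\mathfrak{S}_{p+q}$ let $A^w_{u,v}$ be the set of $\zeta\in\mathfrak{S}^{(p,q)}$ such that (i) $(u\times v)\cdot\zeta^{-1}\le w$, and (ii) whenever $u'\in\mathfrak{S}_p$, $v'\in\mathfrak{S}_q$ satisfy $u\le u'$, $v\le v'$ and $(u'\times v')\cdot\zeta^{-1}\le w$, then $u'=u$ and $v'=v$. Let $\alpha^w_{u,v}=\#A^w_{u,v}$. Then $$\mathcal{M}_u\cdot\mathcal{M}_v=\sum_{w\in\mathfrak{S}_{p+q}}\alpha^w_{u,v}\,\mathcal{M}_w .$$
   Context: Permutations in one-line notation, product is composition. For $u\in\mathfrak{S}_p,v\in\mathfrak{S}_q$, $u\times v\in\mathfrak{S}_{p+q}$ has $(u\times v)(i)=u_i$ ($i\le p$), $(u\times v)(p+j)=p+v_j$. $\mathfrak{S}^{(p,q)}=\{\zeta\in\mathfrak{S}_{p+q}:\zeta_1<\cdots<\zeta_p,\zeta_{p+1}<\cdots<\zeta_{p+q}\}$. $\mathrm{st}(a_1,\ldots,a_m)\in\mathfrak{S}_m$ is the permutation with the same relative order as the distinct integers $a_i$. $\mathfrak{S}Sym$ is the graded Hopf algebra over $\mathbb{Q}$ with basis $\{\mathcal{F}_u:u\in\mathfrak{S}_n,n\ge0\}$, product $\mathcal{F}_u\cdot\mathcal{F}_v=\sum_{\zeta\in\mathfrak{S}^{(p,q)}}\mathcal{F}_{(u\times v)\cdot\zeta^{-1}}$,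 coproduct $\Delta(\mathcal{F}_u)=\sum_{p=0}^n\mathcal{F}_{\mathrm{st}(u_1..u_p)}\otimes\mathcal{F}_{\mathrm{st}(u_{p+1}..u_n)}$. Weak order: $u\le v$ iff $\mathrm{Inv}(u)\subseteq\mathrm{Inv}(v)$, $\mathrm{Inv}(u)=\{(i,j):i<j,u_i>u_j\}$, Möbius function $\mu$. Monomial basis: $\mathcal{M}_u=\sum_{v\ge u}\mu(u,v)\mathcal{F}_v$, equivalently $\mathcal{F}_u=\sum_{v\ge u}\mathcal{M}_v$. *)

theory Defs
  imports Complex_Main
begin

text \<open>Permutations in one-line notation: lists of the values 1..n.\<close>

definition Perms :: "nat \<Rightarrow> nat list set" where
  "Perms n = {w. distinct w \<and> set w = {1..n}}"

text \<open>Composition: (u \<cdot> v)(i) = u(v(i)).\<close>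
definition pcomp :: "nat list \<Rightarrow> nat list \<Rightarrow> nat list" where
  "pcomp u v = map (\<lambda>i. u ! (i - 1)) v"

definition pinv :: "nat list \<Rightarrow> nat list" where
  "pinv u = map (\<lambda>i. Suc (THE j. j < length u \<and> u ! j = i)) [1..<Suc (length u)]"

definition pcross :: "nat list \<Rightarrow> nat list \<Rightarrow> nat list" where
  "pcross u v = u @ map (\<lambda>j. length u + j) v"

definition Shuf :: "nat \<Rightarrow> nat \<Rightarrow> nat list set" where
  "Shuf p q = {z \<in> Perms (p + q). sorted_wrt (<) (take p z) \<and> sorted_wrt (<) (drop p z)}"

text \<open>Inversions (0-based positions) and the weak order.\<close>
definition Inv :: "nat list \<Rightarrow> (nat \<times> nat) set" where
  "Inv u = {(i, j). i < j \<and> j < length u \<and> u ! i > u ! j}"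

definition weak_le :: "nat list \<Rightarrow> nat list \<Rightarrow> bool" where
  "weak_le u v \<longleftrightarrow> Inv u \<subseteq> Inv v"

definition weak_lt :: "nat list \<Rightarrow> nat list \<Rightarrow> bool" where
  "weak_lt u v \<longleftrightarrow> Inv u \<subset> Inv v"

lemma finite_Inv: "finite (Inv u)"
  by (rule finite_subset[of _ "{..<length u} \<times> {..<length u}"]) (auto simp: Inv_def)

function mobius :: "nat list \<Rightarrow> nat list \<Rightarrow> int" where
  "mobius u v = (if u = v then 1
     else if weak_lt u v then
       - (\<Sum>w\<in>{w \<in> Perms (length u). weak_le u w \<and> weak_lt w v}. mobius u w)
     else 0)"
  by auto
termination
  by (relation "measure (\<lambda>(u, v). card (Inv v))")
     (auto simp: weak_lt_def intro: psubset_card_mono finite_Inv)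

text \<open>Homogeneous elements of degree n of SSym are coefficient functions on the
  F-basis, i.e. f = \<Sum>_w f(w) F_w.\<close>

definition FF :: "nat list \<Rightarrow> nat list \<Rightarrow> rat" where
  "FF u = (\<lambda>w. if w = u then 1 else 0)"

definition MM :: "nat list \<Rightarrow> nat list \<Rightarrow> rat" where
  "MM u = (\<lambda>w. if w \<in> Perms (length u) \<and> weak_le u w then of_int (mobius u w) else 0)"

text \<open>Product of a degree-p element and a degree-q element (bilinear extension of
  F_u F_v = \<Sum>_{\<zeta>\<in>S^(p,q)} F_{(u\<times>v)\<zeta>^{-1}}).\<close>
definition sprod :: "nat \<Rightarrow> nat \<Rightarrow> (nat list \<Rightarrow> rat) \<Rightarrow> (nat list \<Rightarrow> rat) \<Rightarrow> (nat list \<Rightarrow> rat)" where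
  "sprod p q f g = (\<lambda>w. \<Sum>u\<in>Perms p. \<Sum>v\<in>Perms q. \<Sum>z\<in>Shuf p q.
      if pcomp (pcross u v) (pinv z) = w then f u * g v else 0)"

definition Aset :: "nat \<Rightarrow> nat \<Rightarrow> nat list \<Rightarrow> nat list \<Rightarrow> nat list \<Rightarrow> nat list set" where
  "Aset p q u v w = {z \<in> Shuf p q.
      weak_le (pcomp (pcross u v) (pinv z)) w \<and>
      (\<forall>u'\<in>Perms p. \<forall>v'\<in>Perms q.
         weak_le u u' \<and> weak_le v v' \<and> weak_le (pcomp (pcross u' v') (pinv z)) w
         \<longrightarrow> u' = u \<and> v' = v)}"

definition alpha :: "nat \<Rightarrow> nat \<Rightarrow> nat list \<Rightarrow> nat list \<Rightarrow> nat list \<Rightarrow> nat" where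
  "alpha p q u v w = card (Aset p q u v w)"

end

theory Submission
  imports Defs
begin

declare mobius.simps[simp del]

lemma Perms_length: "w \<in> Perms n \<Longrightarrow> length w = n"
  unfolding Perms_def using distinct_card by fastforce

lemma finite_Perms: "finite (Perms n)"
proof (rule finite_subset)
  show "Perms n \<subseteq> {xs. set xs \<subseteq> {1..n} \<and> length xs = n}"
    using Perms_length by (auto simp: Perms_def)
  show "finite {xs. set xs \<subseteq> {1..n} \<and> length xs = n}"
    by (rule finite_lists_length_eq) simp
qed

lemma Perms_nth: "w \<in> Perms n \<Longrightarrow> i < n \<Longrightarrow> w ! i \<in> {1..n}"
  using Perms_length[of w n] nth_mem[of i w] by (auto simp: Perms_def)

lemma rank_perm:
  assumes w: "w \<in> Perms n" and i: "i < n"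
  shows "card {j. j < n \<and> w ! j \<le> w ! i} = w ! i"
proof -
  have len: "length w = n" using Perms_length[OF w] .
  have dist: "distinct w" using w by (auto simp: Perms_def)
  have "bij_betw (\<lambda>j. w ! j) {j. j < n \<and> w ! j \<le> w ! i} {1..w ! i}"
    unfolding bij_betw_def
  proof
    show "inj_on ((!) w) {j. j < n \<and> w ! j \<le> w ! i}"
      using dist len by (auto simp: inj_on_def nth_eq_iff_index_eq)
    show "(!) w ` {j. j < n \<and> w ! j \<le> w ! i} = {1..w ! i}"
    proof
      show "(!) w ` {j. j < n \<and> w ! j \<le> w ! i} \<subseteq> {1..w ! i}"
        using Perms_nth[OF w] by auto
      show "{1..w ! i} \<subseteq> (!) w ` {j. j < n \<and> w ! j \<le> w ! i}"
      proof
        fix k assume k: "k \<in> {1..w ! i}"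
        then have "k \<in> set w" using Perms_nth[OF w i] w by (auto simp: Perms_def)
        then obtain j where "j < n" "w ! j = k" using len by (auto simp: in_set_conv_nth)
        then show "k \<in> (!) w ` {j. j < n \<and> w ! j \<le> w ! i}" using k by auto
      qed
    qed
  qed
  then show ?thesis using bij_betw_same_card by fastforce
qed

lemma rank_set:
  assumes w: "w \<in> Perms n" and i: "i < n"
  shows "{j. j < n \<and> w ! j \<le> w ! i} =
    {j. j < n \<and> (j = i \<or> (j < i \<and> (j, i) \<notin> Inv w) \<or> (i < j \<and> (i, j) \<in> Inv w))}"
proof -
  have len: "length w = n" using Perms_length[OF w] .
  have dist: "distinct w" using w by (auto simp: Perms_def)
  have "w ! j \<le> w ! i \<longleftrightarrow> (j = i \<or> (j < i \<and> (j, i) \<notin> Inv w) \<or> (i < j \<and> (i, j) \<in> Inv w))"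
    if j: "j < n" for j
  proof (cases j i rule: linorder_cases)
    case less
    then show ?thesis using len i j by (auto simp: Inv_def)
  next
    case equal
    then show ?thesis by simp
  next
    case greater
    have "w ! j \<noteq> w ! i" using greater dist len i j by (simp add: nth_eq_iff_index_eq)
    then show ?thesis using greater len i j by (auto simp: Inv_def)
  qed
  then show ?thesis by auto
qed

lemma Inv_determines:
  assumes u: "u \<in> Perms n" and v: "v \<in> Perms n" and e: "Inv u = Inv v"
  shows "u = v"
proof (rule nth_equalityI)
  show "length u = length v" using Perms_length[OF u] Perms_length[OF v] by simp
  fix i assume "i < length u"
  then have i: "i < n" using Perms_length[OF u] by simp
  show "u ! i = v ! i"
    using rank_perm[OF u i] rank_perm[OF v i] rank_set[OF u i] rank_set[OF v i] e by simp
qed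

lemma weak_antisym: "u \<in> Perms n \<Longrightarrow> v \<in> Perms n \<Longrightarrow> weak_le u v \<Longrightarrow> weak_le v u \<Longrightarrow> u = v"
  using Inv_determines unfolding weak_le_def by blast

lemma mob_sum:
  assumes u: "u \<in> Perms n" and y: "y \<in> Perms n"
  shows "(\<Sum>x\<in>{x\<in>Perms n. weak_le u x \<and> weak_le x y}. mobius u x) = (if u = y then 1 else 0)"
proof (cases "weak_le u y")
  case False
  then have e: "{x\<in>Perms n. weak_le u x \<and> weak_le x y} = {}" by (auto simp: weak_le_def)
  have "u \<noteq> y" using False by (auto simp: weak_le_def)
  then show ?thesis by (subst e) simp
next
  case True
  show ?thesis
  proof (cases "u = y")
    case True
    then have "{x\<in>Perms n. weak_le u x \<and> weak_le x y} = {u}"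
      using weak_antisym[OF u] u by (auto simp: weak_le_def)
    then show ?thesis using True by (simp add: mobius.simps)
  next
    case False
    have lt: "weak_lt u y" using True False Inv_determines[OF u y]
      by (auto simp: weak_le_def weak_lt_def)
    define B where "B = {w \<in> Perms (length u). weak_le u w \<and> weak_lt w y}"
    have m: "mobius u y = - sum (mobius u) B"
      unfolding B_def using False lt by (subst mobius.simps) simp
    have "{x\<in>Perms n. weak_le u x \<and> weak_le x y} = insert y B"
      unfolding B_def using Perms_length[OF u] True y Inv_determines[OF _ y]
      by (auto simp: weak_le_def weak_lt_def)
    moreover have "y \<notin> B" unfolding B_def by (auto simp: weak_lt_def)
    moreover have "finite B" unfolding B_def using finite_Perms by simp
    ultimately show ?thesis using m False by simp
  qed
qed

definition st :: "nat list \<Rightarrow> nat list" where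
  "st xs = map (\<lambda>a. card {b \<in> set xs. b \<le> a}) xs"

lemma rank_less_iff:
  fixes xs :: "nat list"
  assumes "a \<in> set xs" "b \<in> set xs"
  shows "card {c \<in> set xs. c \<le> a} < card {c \<in> set xs. c \<le> b} \<longleftrightarrow> a < b"
proof
  assume "a < b"
  then have "{c \<in> set xs. c \<le> a} \<subseteq> {c \<in> set xs. c \<le> b}" by auto
  moreover have "b \<in> {c \<in> set xs. c \<le> b}" "b \<notin> {c \<in> set xs. c \<le> a}" using assms \<open>a < b\<close> by auto
  ultimately have "{c \<in> set xs. c \<le> a} \<subset> {c \<in> set xs. c \<le> b}" by blast
  then show "card {c \<in> set xs. c \<le> a} < card {c \<in> set xs. c \<le> b}"
    by (rule psubset_card_mono[rotated]) simp
next
  assume h: "card {c \<in> set xs. c \<le> a} < card {c \<in> set xs. c \<le> b}"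
  show "a < b"
  proof (rule ccontr)
    assume "\<not> a < b"
    then have "{c \<in> set xs. c \<le> b} \<subseteq> {c \<in> set xs. c \<le> a}" by auto
    then have "card {c \<in> set xs. c \<le> b} \<le> card {c \<in> set xs. c \<le> a}"
      by (rule card_mono[rotated]) simp
    then show False using h by simp
  qed
qed

lemma st_less_iff: "i < length xs \<Longrightarrow> j < length xs \<Longrightarrow> st xs ! j < st xs ! i \<longleftrightarrow> xs ! j < xs ! i"
  by (simp add: st_def rank_less_iff)

lemma Inv_st: "Inv (st xs) = Inv xs"
proof -
  have l: "length (st xs) = length xs" by (simp add: st_def)
  show ?thesis unfolding Inv_def l using st_less_iff
    by (metis (no_types, lifting) dual_order.strict_trans)
qed

lemma st_Perms:
  assumes d: "distinct xs"
  shows "st xs \<in> Perms (length xs)"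
proof -
  let ?r = "\<lambda>a. card {b \<in> set xs. b \<le> a}"
  have inj: "inj_on ?r (set xs)"
  proof (rule inj_onI)
    fix a b assume "a \<in> set xs" "b \<in> set xs" "?r a = ?r b"
    then show "a = b" using rank_less_iff[of a xs b] rank_less_iff[of b xs a] by auto
  qed
  have dst: "distinct (st xs)" unfolding st_def using d inj by (simp add: distinct_map)
  have sub: "set (st xs) \<subseteq> {1..length xs}"
  proof
    fix k assume "k \<in> set (st xs)"
    then obtain a where a: "a \<in> set xs" "k = ?r a" unfolding st_def by auto
    have "a \<in> {b \<in> set xs. b \<le> a}" using a by simp
    then have ne: "{b \<in> set xs. b \<le> a} \<noteq> {}" by blast
    have fin: "finite {b \<in> set xs. b \<le> a}" by simp
    have "0 < ?r a" using ne fin by (simp add: card_gt_0_iff)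
    then have "1 \<le> ?r a" by simp
    moreover have "?r a \<le> card (set xs)" by (rule card_mono) auto
    ultimately show "k \<in> {1..length xs}" using a d distinct_card by fastforce
  qed
  have "card (set (st xs)) = length xs" using dst distinct_card by (fastforce simp: st_def)
  then have "set (st xs) = {1..length xs}" using sub by (simp add: card_subset_eq)
  then show ?thesis using dst by (simp add: Perms_def)
qed

lemma length_pinv: "length (pinv z) = length z"
  by (simp add: pinv_def del: upt_Suc)

lemma pinv_nth:
  assumes z: "z \<in> Perms N" and i: "i < N"
  shows "pinv z ! (z ! i - 1) = Suc i"
proof -
  have len: "length z = N" using Perms_length[OF z] .
  have dist: "distinct z" using z by (simp add: Perms_def)
  have zi: "z ! i \<in> {1..N}" using Perms_nth[OF z i] .
  have "(THE j. j < length z \<and> z ! j = z ! i) = i"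
    by (rule the_equality) (use len dist i in \<open>auto simp: nth_eq_iff_index_eq\<close>)
  moreover have "[1..<Suc (length z)] ! (z ! i - 1) = z ! i" using zi len by (auto simp del: upt_Suc)
  ultimately show ?thesis using zi len unfolding pinv_def by (auto simp del: upt_Suc)
qed

lemma length_phi: "length (pcomp c (pinv z)) = length z"
  by (simp add: pcomp_def length_pinv)

lemma phi_nth:
  assumes z: "z \<in> Perms N" and i: "i < N"
  shows "pcomp c (pinv z) ! (z ! i - 1) = c ! i"
proof -
  have "z ! i - 1 < length (pinv z)" using Perms_nth[OF z i] Perms_length[OF z] length_pinv[of z] by auto
  then show ?thesis using pinv_nth[OF z i] by (simp add: pcomp_def)
qed

lemma z_surj:
  assumes z: "z \<in> Perms N" and a: "a < N"
  shows "\<exists>i<N. z ! i - 1 = a"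
proof -
  have "Suc a \<in> set z" using z a by (auto simp: Perms_def)
  then obtain i where "i < length z" "z ! i = Suc a" by (auto simp: in_set_conv_nth)
  then show ?thesis using Perms_length[OF z] by (intro exI[of _ i]) auto
qed

lemma z_inj:
  assumes z: "z \<in> Perms N" and i: "i < N" and j: "j < N"
  shows "z ! i - 1 = z ! j - 1 \<longleftrightarrow> i = j"
proof
  assume h: "z ! i - 1 = z ! j - 1"
  have "z ! i = z ! j" using h Perms_nth[OF z i] Perms_nth[OF z j] by auto
  then show "i = j" using z Perms_length[OF z] i j by (auto simp: Perms_def nth_eq_iff_index_eq)
qed simp
lemma phi_Perms:
  assumes z: "z \<in> Perms N" and c: "c \<in> Perms N"
  shows "pcomp c (pinv z) \<in> Perms N"
proof -
  let ?x = "pcomp c (pinv z)"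
  have lx: "length ?x = N" using length_phi Perms_length[OF z] by simp
  have lc: "length c = N" using Perms_length[OF c] .
  have dc: "distinct c" using c by (simp add: Perms_def)
  have "distinct ?x"
    unfolding distinct_conv_nth
  proof (intro allI impI)
    fix a b assume a: "a < length ?x" and b: "b < length ?x" and ab: "a \<noteq> b"
    obtain i where i: "i < N" "z ! i - 1 = a" using z_surj[OF z, of a] a lx by auto
    obtain j where j: "j < N" "z ! j - 1 = b" using z_surj[OF z, of b] b lx by auto
    have "i \<noteq> j" using i j ab by auto
    then show "?x ! a \<noteq> ?x ! b" using phi_nth[OF z i(1)] phi_nth[OF z j(1)] i j dc lc
      by (auto simp: nth_eq_iff_index_eq)
  qed
  moreover have "set ?x = set c"
  proof
    show "set ?x \<subseteq> set c"
    proof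
      fix k assume "k \<in> set ?x"
      then obtain a where a: "a < N" "k = ?x ! a" using lx by (auto simp: in_set_conv_nth)
      obtain i where i: "i < N" "z ! i - 1 = a" using z_surj[OF z a(1)] by auto
      show "k \<in> set c" using a i phi_nth[OF z i(1)] lc by auto
    qed
    show "set c \<subseteq> set ?x"
    proof
      fix k assume "k \<in> set c"
      then obtain i where i: "i < N" "k = c ! i" using lc by (auto simp: in_set_conv_nth)
      have "z ! i - 1 < N" using Perms_nth[OF z i(1)] by auto
      then show "k \<in> set ?x" using i phi_nth[OF z i(1)] lx by (metis nth_mem)
    qed
  qed
  ultimately show ?thesis using c by (simp add: Perms_def)
qed

lemma pcross_Perms:
  assumes u: "u \<in> Perms p" and v: "v \<in> Perms q"
  shows "pcross u v \<in> Perms (p + q)"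
proof -
  have lu: "length u = p" using Perms_length[OF u] .
  have "distinct (map ((+) p) v)" using v by (simp add: Perms_def distinct_map)
  moreover have "set u \<inter> set (map ((+) p) v) = {}" using u v by (auto simp: Perms_def)
  moreover have "set u \<union> set (map ((+) p) v) = {1..p+q}"
  proof -
    have "set (map ((+) p) v) = (+) p ` {1..q}" using v by (simp add: Perms_def)
    also have "\<dots> = {p+1..p+q}" by (simp add: image_add_atLeastAtMost)
    finally show ?thesis using u by (auto simp: Perms_def)
  qed
  ultimately show ?thesis using u lu unfolding pcross_def Perms_def by auto
qed

lemma weak_le_phi:
  assumes z: "z \<in> Perms N" and lc: "length c = N" and ly: "length y = N"
  shows "weak_le (pcomp c (pinv z)) y \<longleftrightarrow>
    (\<forall>i<N. \<forall>j<N. z ! i < z ! j \<and> c ! j < c ! i \<longrightarrow> y ! (z ! j - 1) < y ! (z ! i - 1))"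
    (is "?L \<longleftrightarrow> ?R")
proof
  let ?x = "pcomp c (pinv z)"
  have lx: "length ?x = N" using length_phi Perms_length[OF z] by simp
  assume L: ?L
  show ?R
  proof (intro allI impI)
    fix i j assume i: "i < N" and j: "j < N" and h: "z ! i < z ! j \<and> c ! j < c ! i"
    have "(z ! i - 1, z ! j - 1) \<in> Inv ?x"
      using h Perms_nth[OF z i] Perms_nth[OF z j] phi_nth[OF z i, of c] phi_nth[OF z j, of c] lx
      by (auto simp: Inv_def)
    then show "y ! (z ! j - 1) < y ! (z ! i - 1)" using L by (auto simp: weak_le_def Inv_def)
  qed
next
  let ?x = "pcomp c (pinv z)"
  have lx: "length ?x = N" using length_phi Perms_length[OF z] by simp
  assume R: ?R
  show ?L unfolding weak_le_def
  proof
    fix ab assume "ab \<in> Inv ?x"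
    then obtain a b where ab: "ab = (a, b)" "a < b" "b < N" "?x ! b < ?x ! a" using lx by (auto simp: Inv_def)
    obtain i where i: "i < N" "z ! i - 1 = a" using z_surj[OF z, of a] ab by auto
    obtain j where j: "j < N" "z ! j - 1 = b" using z_surj[OF z, of b] ab by auto
    have "z ! i < z ! j" using i j ab(2) by auto
    moreover have "c ! j < c ! i" using ab(4) i j phi_nth[OF z i(1), of c] phi_nth[OF z j(1), of c] by simp
    ultimately have "y ! b < y ! a" using R i j by auto
    then show "ab \<in> Inv y" using ab ly by (auto simp: Inv_def)
  qed
qed

definition ys1 :: "nat \<Rightarrow> nat list \<Rightarrow> nat list \<Rightarrow> nat list" where
  "ys1 p z y = map (\<lambda>i. y ! (z ! i - 1)) [0..<p]"

definition ys2 :: "nat \<Rightarrow> nat \<Rightarrow> nat list \<Rightarrow> nat list \<Rightarrow> nat list" where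
  "ys2 p q z y = map (\<lambda>j. y ! (z ! (p + j) - 1)) [0..<q]"

definition Cz :: "nat \<Rightarrow> nat \<Rightarrow> nat list \<Rightarrow> nat list \<Rightarrow> bool" where
  "Cz p q z y \<longleftrightarrow> (\<forall>i j. j < p \<and> p \<le> i \<and> i < p + q \<and> z ! i < z ! j \<longrightarrow> y ! (z ! j - 1) < y ! (z ! i - 1))"

lemma Inv_ys1: "Inv (ys1 p z y) = {(i, j). i < j \<and> j < p \<and> y ! (z ! j - 1) < y ! (z ! i - 1)}"
  by (auto simp: Inv_def ys1_def)

lemma Inv_ys2: "Inv (ys2 p q z y) = {(i, j). i < j \<and> j < q \<and> y ! (z ! (p + j) - 1) < y ! (z ! (p + i) - 1)}"
  by (auto simp: Inv_def ys2_def)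

lemma Shuf_mono1:
  assumes z: "z \<in> Shuf p q" and i: "i < p" and j: "j < p"
  shows "z ! i < z ! j \<longleftrightarrow> i < j"
proof -
  have lz: "length z = p + q" using z Perms_length by (auto simp: Shuf_def)
  have s: "sorted_wrt (<) (take p z)" using z by (simp add: Shuf_def)
  have "\<And>a b. a < b \<Longrightarrow> b < p \<Longrightarrow> z ! a < z ! b"
    using sorted_wrt_nth_less[OF s] lz by fastforce
  then show ?thesis using i j by (metis less_asym linorder_neqE_nat)
qed

lemma Shuf_mono2:
  assumes z: "z \<in> Shuf p q" and i: "i < q" and j: "j < q"
  shows "z ! (p + i) < z ! (p + j) \<longleftrightarrow> i < j"
proof -
  have lz: "length z = p + q" using z Perms_length by (auto simp: Shuf_def)
  have s: "sorted_wrt (<) (drop p z)" using z by (simp add: Shuf_def)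
  have "\<And>a b. a < b \<Longrightarrow> b < q \<Longrightarrow> z ! (p + a) < z ! (p + b)"
    using sorted_wrt_nth_less[OF s] lz by fastforce
  then show ?thesis using i j by (metis less_asym linorder_neqE_nat)
qed

lemma decomp:
  assumes z: "z \<in> Shuf p q" and u': "u' \<in> Perms p" and v': "v' \<in> Perms q"
    and ly: "length y = p + q"
  shows "weak_le (pcomp (pcross u' v') (pinv z)) y \<longleftrightarrow>
    Cz p q z y \<and> Inv u' \<subseteq> Inv (ys1 p z y) \<and> Inv v' \<subseteq> Inv (ys2 p q z y)"
proof -
  let ?c = "pcross u' v'"
  have zP: "z \<in> Perms (p + q)" using z by (simp add: Shuf_def)
  have lu: "length u' = p" using Perms_length[OF u'] .
  have lv: "length v' = q" using Perms_length[OF v'] .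
  have lc: "length ?c = p + q" using lu lv by (simp add: pcross_def)
  have cu: "\<And>i. i < p \<Longrightarrow> ?c ! i = u' ! i" using lu by (simp add: pcross_def nth_append)
  have cv: "\<And>i. p \<le> i \<Longrightarrow> i < p + q \<Longrightarrow> ?c ! i = p + v' ! (i - p)"
    using lu lv by (simp add: pcross_def nth_append)
  have ub: "\<And>i. i < p \<Longrightarrow> u' ! i \<le> p" using Perms_nth[OF u'] by auto
  have vb: "\<And>j. j < q \<Longrightarrow> 1 \<le> v' ! j" using Perms_nth[OF v'] by auto
  have cuv: "\<And>i j. j < p \<Longrightarrow> p \<le> i \<Longrightarrow> i < p + q \<Longrightarrow> ?c ! j < ?c ! i"
  proof -
    fix i j assume "j < p" "p \<le> i" "i < p + q"
    then show "?c ! j < ?c ! i" using cu cv ub vb[of "i - p"] by fastforce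
  qed
  have E: "weak_le (pcomp ?c (pinv z)) y \<longleftrightarrow>
    (\<forall>i<p+q. \<forall>j<p+q. z ! i < z ! j \<and> ?c ! j < ?c ! i \<longrightarrow> y ! (z ! j - 1) < y ! (z ! i - 1))"
    by (rule weak_le_phi[OF zP lc ly])
  show ?thesis unfolding E
  proof (intro iffI conjI)
    assume H: "\<forall>i<p+q. \<forall>j<p+q. z ! i < z ! j \<and> ?c ! j < ?c ! i \<longrightarrow> y ! (z ! j - 1) < y ! (z ! i - 1)"
    show "Cz p q z y" unfolding Cz_def using H cuv by auto
    show "Inv u' \<subseteq> Inv (ys1 p z y)"
    proof
      fix ij assume "ij \<in> Inv u'"
      then obtain i j where ij: "ij = (i, j)" "i < j" "j < p" "u' ! j < u' ! i" using lu by (auto simp: Inv_def)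
      have "z ! i < z ! j" using Shuf_mono1[OF z, of i j] ij by auto
      then have "y ! (z ! j - 1) < y ! (z ! i - 1)" using H ij cu[of i] cu[of j] by auto
      then show "ij \<in> Inv (ys1 p z y)" using ij by (simp add: Inv_ys1)
    qed
    show "Inv v' \<subseteq> Inv (ys2 p q z y)"
    proof
      fix ij assume "ij \<in> Inv v'"
      then obtain i j where ij: "ij = (i, j)" "i < j" "j < q" "v' ! j < v' ! i" using lv by (auto simp: Inv_def)
      have "z ! (p + i) < z ! (p + j)" using Shuf_mono2[OF z, of i j] ij by auto
      moreover have "?c ! (p + j) < ?c ! (p + i)" using cv[of "p + i"] cv[of "p + j"] ij by auto
      ultimately have "y ! (z ! (p + j) - 1) < y ! (z ! (p + i) - 1)" using H ij by auto
      then show "ij \<in> Inv (ys2 p q z y)" using ij by (simp add: Inv_ys2)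
    qed
  next
    assume H: "Cz p q z y \<and> Inv u' \<subseteq> Inv (ys1 p z y) \<and> Inv v' \<subseteq> Inv (ys2 p q z y)"
    show "\<forall>i<p+q. \<forall>j<p+q. z ! i < z ! j \<and> ?c ! j < ?c ! i \<longrightarrow> y ! (z ! j - 1) < y ! (z ! i - 1)"
    proof (intro allI impI)
      fix i j assume i: "i < p + q" and j: "j < p + q" and h: "z ! i < z ! j \<and> ?c ! j < ?c ! i"
      show "y ! (z ! j - 1) < y ! (z ! i - 1)"
      proof (cases "i < p")
        case ip: True
        show ?thesis
        proof (cases "j < p")
          case True
          then have "i < j" using Shuf_mono1[OF z ip True] h by simp
          then have "(i, j) \<in> Inv u'" using h cu ip True lu by (auto simp: Inv_def)
          then show ?thesis using H by (auto simp: Inv_ys1)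
        next
          case False
          then show ?thesis using cuv[of i j] h ip j cuv[of j i] by auto
        qed
      next
        case ip: False
        show ?thesis
        proof (cases "j < p")
          case True
          then show ?thesis using H ip i h unfolding Cz_def by auto
        next
          case False
          obtain i' where i': "i = p + i'" "i' < q" using ip i by (metis add_diff_inverse_nat add_less_cancel_left)
          obtain j' where j': "j = p + j'" "j' < q" using False j by (metis add_diff_inverse_nat add_less_cancel_left)
          have "i' < j'" using Shuf_mono2[OF z i'(2) j'(2)] h i' j' by simp
          moreover have "v' ! j' < v' ! i'" using h cv[of i] cv[of j] i j i' j' by simp
          ultimately have "(i', j') \<in> Inv v'" using j' lv by (auto simp: Inv_def)
          then show ?thesis using H i' j' by (auto simp: Inv_ys2)
        qed
      qed
    qed
  qed
qed

lemma ys1_distinct: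
  assumes z: "z \<in> Shuf p q" and y: "y \<in> Perms (p + q)"
  shows "distinct (ys1 p z y)"
proof -
  have zP: "z \<in> Perms (p + q)" using z by (simp add: Shuf_def)
  have dy: "distinct y" and ly: "length y = p + q" using y Perms_length[OF y] by (auto simp: Perms_def)
  have "inj_on (\<lambda>i. y ! (z ! i - 1)) {0..<p}"
  proof (rule inj_onI)
    fix i j assume i: "i \<in> {0..<p}" and j: "j \<in> {0..<p}" and e: "y ! (z ! i - 1) = y ! (z ! j - 1)"
    have "z ! i - 1 < p + q" "z ! j - 1 < p + q" using Perms_nth[OF zP, of i] Perms_nth[OF zP, of j] i j by auto
    then have "z ! i - 1 = z ! j - 1" using e dy ly by (simp add: nth_eq_iff_index_eq)
    then show "i = j" using z_inj[OF zP, of i j] i j by auto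
  qed
  then show ?thesis by (simp add: ys1_def distinct_map)
qed

lemma ys2_distinct:
  assumes z: "z \<in> Shuf p q" and y: "y \<in> Perms (p + q)"
  shows "distinct (ys2 p q z y)"
proof -
  have zP: "z \<in> Perms (p + q)" using z by (simp add: Shuf_def)
  have dy: "distinct y" and ly: "length y = p + q" using y Perms_length[OF y] by (auto simp: Perms_def)
  have "inj_on (\<lambda>i. y ! (z ! (p + i) - 1)) {0..<q}"
  proof (rule inj_onI)
    fix i j assume i: "i \<in> {0..<q}" and j: "j \<in> {0..<q}" and e: "y ! (z ! (p + i) - 1) = y ! (z ! (p + j) - 1)"
    have "z ! (p + i) - 1 < p + q" "z ! (p + j) - 1 < p + q"
      using Perms_nth[OF zP, of "p + i"] Perms_nth[OF zP, of "p + j"] i j by auto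
    then have "z ! (p + i) - 1 = z ! (p + j) - 1" using e dy ly by (simp add: nth_eq_iff_index_eq)
    then show "i = j" using z_inj[OF zP, of "p + i" "p + j"] i j by auto
  qed
  then show ?thesis by (simp add: ys2_def distinct_map)
qed

definition Y1 where "Y1 p z y = st (ys1 p z y)"
definition Y2 where "Y2 p q z y = st (ys2 p q z y)"

lemma Y1_Perms: "z \<in> Shuf p q \<Longrightarrow> y \<in> Perms (p + q) \<Longrightarrow> Y1 p z y \<in> Perms p"
  using st_Perms[OF ys1_distinct] by (simp add: Y1_def ys1_def)

lemma Y2_Perms: "z \<in> Shuf p q \<Longrightarrow> y \<in> Perms (p + q) \<Longrightarrow> Y2 p q z y \<in> Perms q"
  using st_Perms[OF ys2_distinct] by (simp add: Y2_def ys2_def)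

lemma decomp2:
  assumes z: "z \<in> Shuf p q" and u': "u' \<in> Perms p" and v': "v' \<in> Perms q"
    and y: "y \<in> Perms (p + q)"
  shows "weak_le (pcomp (pcross u' v') (pinv z)) y \<longleftrightarrow>
    Cz p q z y \<and> weak_le u' (Y1 p z y) \<and> weak_le v' (Y2 p q z y)"
  using decomp[OF z u' v' Perms_length[OF y]] by (simp add: weak_le_def Y1_def Y2_def Inv_st)

lemma MM_eq: "u \<in> Perms p \<Longrightarrow> MM u u' = (if u' \<in> Perms p \<and> weak_le u u' then of_int (mobius u u') else 0)"
  using Perms_length by (simp add: MM_def)

lemma factor:
  assumes u: "u \<in> Perms p" and Y: "Y \<in> Perms p"
  shows "(\<Sum>u'\<in>Perms p. if weak_le u' Y then MM u u' else 0) = (if u = Y then 1 else 0)"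
proof -
  have "(\<Sum>u'\<in>Perms p. if weak_le u' Y then MM u u' else 0)
      = (\<Sum>u'\<in>Perms p. if weak_le u u' \<and> weak_le u' Y then of_int (mobius u u') else 0)"
    by (rule sum.cong) (auto simp: MM_eq[OF u])
  also have "\<dots> = (\<Sum>u'\<in>{x\<in>Perms p. weak_le u x \<and> weak_le x Y}. of_int (mobius u u'))"
    by (simp add: sum.inter_filter finite_Perms)
  also have "\<dots> = of_int (\<Sum>u'\<in>{x\<in>Perms p. weak_le u x \<and> weak_le x Y}. mobius u u')"
    by simp
  also have "\<dots> = (if u = Y then 1 else 0)" using mob_sum[OF u Y] by simp
  finally show ?thesis .
qed

lemma perz:
  assumes u: "u \<in> Perms p" and v: "v \<in> Perms q" and z: "z \<in> Shuf p q" and y: "y \<in> Perms (p + q)"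
  shows "(\<Sum>u'\<in>Perms p. \<Sum>v'\<in>Perms q. if weak_le (pcomp (pcross u' v') (pinv z)) y then MM u u' * MM v v' else 0)
     = (if Cz p q z y \<and> u = Y1 p z y \<and> v = Y2 p q z y then 1 else 0)"
proof -
  have "(\<Sum>u'\<in>Perms p. \<Sum>v'\<in>Perms q. if weak_le (pcomp (pcross u' v') (pinv z)) y then MM u u' * MM v v' else 0)
     = (\<Sum>u'\<in>Perms p. \<Sum>v'\<in>Perms q. (if Cz p q z y then 1 else 0) *
         ((if weak_le u' (Y1 p z y) then MM u u' else 0) * (if weak_le v' (Y2 p q z y) then MM v v' else 0)))"
    by (intro sum.cong refl) (simp add: decomp2[OF z _ _ y])
  also have "\<dots> = (if Cz p q z y then 1 else 0) *
       ((\<Sum>u'\<in>Perms p. if weak_le u' (Y1 p z y) then MM u u' else 0) *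
        (\<Sum>v'\<in>Perms q. if weak_le v' (Y2 p q z y) then MM v v' else 0))"
    by (subst sum_product) (simp only: sum_distrib_left)
  also have "\<dots> = (if Cz p q z y \<and> u = Y1 p z y \<and> v = Y2 p q z y then 1 else 0)"
    using factor[OF u Y1_Perms[OF z y]] factor[OF v Y2_Perms[OF z y]] by simp
  finally show ?thesis .
qed

lemma Aset_eq:
  assumes u: "u \<in> Perms p" and v: "v \<in> Perms q" and y: "y \<in> Perms (p + q)"
  shows "Aset p q u v y = {z \<in> Shuf p q. Cz p q z y \<and> u = Y1 p z y \<and> v = Y2 p q z y}"
proof (rule set_eqI, rule iffI)
  fix z assume "z \<in> Aset p q u v y"
  then have z: "z \<in> Shuf p q" and h1: "weak_le (pcomp (pcross u v) (pinv z)) y"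
    and h2: "\<forall>u'\<in>Perms p. \<forall>v'\<in>Perms q. weak_le u u' \<and> weak_le v v' \<and>
       weak_le (pcomp (pcross u' v') (pinv z)) y \<longrightarrow> u' = u \<and> v' = v"
    by (auto simp: Aset_def)
  have c: "Cz p q z y" "weak_le u (Y1 p z y)" "weak_le v (Y2 p q z y)"
    using h1 decomp2[OF z u v y] by auto
  have "weak_le (pcomp (pcross (Y1 p z y) (Y2 p q z y)) (pinv z)) y"
    using decomp2[OF z Y1_Perms[OF z y] Y2_Perms[OF z y] y] c by (simp add: weak_le_def)
  then have "Y1 p z y = u \<and> Y2 p q z y = v"
    using h2 Y1_Perms[OF z y] Y2_Perms[OF z y] c by blast
  then show "z \<in> {z \<in> Shuf p q. Cz p q z y \<and> u = Y1 p z y \<and> v = Y2 p q z y}" using z c by auto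
next
  fix z assume "z \<in> {z \<in> Shuf p q. Cz p q z y \<and> u = Y1 p z y \<and> v = Y2 p q z y}"
  then have z: "z \<in> Shuf p q" and c: "Cz p q z y" "u = Y1 p z y" "v = Y2 p q z y" by auto
  have h1: "weak_le (pcomp (pcross u v) (pinv z)) y"
    using decomp2[OF z u v y] c by (simp add: weak_le_def)
  have h2: "u' = u \<and> v' = v" if u': "u' \<in> Perms p" and v': "v' \<in> Perms q" and
     a: "weak_le u u'" "weak_le v v'" "weak_le (pcomp (pcross u' v') (pinv z)) y" for u' v'
  proof -
    have "weak_le u' u" "weak_le v' v" using a(3) decomp2[OF z u' v' y] c by auto
    then show ?thesis using weak_antisym[OF u u'] weak_antisym[OF v v'] a by auto
  qed
  show "z \<in> Aset p q u v y" unfolding Aset_def using z h1 h2 by auto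
qed

lemma S_inj:
  fixes f g :: "nat list \<Rightarrow> rat"
  assumes f0: "\<And>x. x \<notin> Perms n \<Longrightarrow> f x = 0" and g0: "\<And>x. x \<notin> Perms n \<Longrightarrow> g x = 0"
    and S: "\<And>y. y \<in> Perms n \<Longrightarrow> (\<Sum>x\<in>{x\<in>Perms n. weak_le x y}. f x) = (\<Sum>x\<in>{x\<in>Perms n. weak_le x y}. g x)"
  shows "f = g"
proof -
  have main: "y \<in> Perms n \<Longrightarrow> f y = g y" for y
  proof (induction "card (Inv y)" arbitrary: y rule: less_induct)
    case less
    let ?B = "{x\<in>Perms n. weak_le x y \<and> x \<noteq> y}"
    have eq: "{x\<in>Perms n. weak_le x y} = insert y ?B" using less.prems by (auto simp: weak_le_def)
    have "f x = g x" if x: "x \<in> ?B" for x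
    proof -
      have "Inv x \<subset> Inv y" using x Inv_determines[OF _ less.prems, of x] by (auto simp: weak_le_def)
      then have "card (Inv x) < card (Inv y)" by (rule psubset_card_mono[OF finite_Inv])
      then show ?thesis using less.hyps x by auto
    qed
    then have sB: "sum f ?B = sum g ?B" by (rule sum.cong[OF refl])
    have fin: "finite ?B" using finite_Perms by simp
    have "f y + sum f ?B = g y + sum g ?B"
      using S[OF less.prems] eq fin by simp
    then show ?case using sB by simp
  qed
  show ?thesis
  proof
    fix x show "f x = g x" by (cases "x \<in> Perms n") (auto simp: main f0 g0)
  qed
qed

lemma swap4:
  "(\<Sum>x\<in>X. \<Sum>a\<in>A. \<Sum>b\<in>B. \<Sum>c\<in>C. (F x a b c :: rat)) = (\<Sum>a\<in>A. \<Sum>b\<in>B. \<Sum>c\<in>C. \<Sum>x\<in>X. F x a b c)"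
proof -
  have "(\<Sum>x\<in>X. \<Sum>a\<in>A. \<Sum>b\<in>B. \<Sum>c\<in>C. F x a b c) = (\<Sum>a\<in>A. \<Sum>x\<in>X. \<Sum>b\<in>B. \<Sum>c\<in>C. F x a b c)"
    by (rule sum.swap)
  also have "\<dots> = (\<Sum>a\<in>A. \<Sum>b\<in>B. \<Sum>x\<in>X. \<Sum>c\<in>C. F x a b c)"
    by (rule sum.cong[OF refl], rule sum.swap)
  also have "\<dots> = (\<Sum>a\<in>A. \<Sum>b\<in>B. \<Sum>c\<in>C. \<Sum>x\<in>X. F x a b c)"
    by (rule sum.cong[OF refl], rule sum.cong[OF refl], rule sum.swap)
  finally show ?thesis .
qed

lemma swap3:
  "(\<Sum>a\<in>A. \<Sum>b\<in>B. \<Sum>c\<in>C. (F a b c :: rat)) = (\<Sum>c\<in>C. \<Sum>a\<in>A. \<Sum>b\<in>B. F a b c)"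
proof -
  have "(\<Sum>a\<in>A. \<Sum>b\<in>B. \<Sum>c\<in>C. F a b c) = (\<Sum>a\<in>A. \<Sum>c\<in>C. \<Sum>b\<in>B. F a b c)"
    by (rule sum.cong[OF refl], rule sum.swap)
  also have "\<dots> = (\<Sum>c\<in>C. \<Sum>a\<in>A. \<Sum>b\<in>B. F a b c)"
    by (rule sum.swap)
  finally show ?thesis .
qed


theorem mainTheorem7:
  fixes p q :: nat and u v :: "nat list"
  assumes "p \<ge> 1" and "q \<ge> 1" and "u \<in> Perms p" and "v \<in> Perms q"
  shows "sprod p q (MM u) (MM v) = (\<lambda>x. \<Sum>w\<in>Perms (p + q). of_nat (alpha p q u v w) * MM w x)"
proof (rule S_inj[where n = "p + q"])
  note u = \<open>u \<in> Perms p\<close> and v = \<open>v \<in> Perms q\<close>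
  let ?N = "p + q"
  let ?phi = "\<lambda>u' v' z. pcomp (pcross u' v') (pinv z)"
  have phiP: "?phi u' v' z \<in> Perms ?N" if "u' \<in> Perms p" "v' \<in> Perms q" "z \<in> Shuf p q" for u' v' z
    using phi_Perms[of z ?N "pcross u' v'"] pcross_Perms[OF that(1,2)] that(3) by (simp add: Shuf_def)
  have finS: "finite (Shuf p q)" using finite_Perms[of ?N] by (rule rev_finite_subset) (auto simp: Shuf_def)
  show "sprod p q (MM u) (MM v) x = 0" if "x \<notin> Perms ?N" for x
    unfolding sprod_def
  proof (intro sum.neutral ballI)
    fix u' v' z assume "u' \<in> Perms p" "v' \<in> Perms q" "z \<in> Shuf p q"
    then have "?phi u' v' z \<noteq> x" using phiP that by metis
    then show "(if ?phi u' v' z = x then MM u u' * MM v v' else 0) = 0" by simp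
  qed
  show "(\<Sum>w\<in>Perms ?N. of_nat (alpha p q u v w) * MM w x) = 0" if "x \<notin> Perms ?N" for x
  proof (intro sum.neutral ballI)
    fix w assume "w \<in> Perms ?N"
    then have "length w = ?N" by (rule Perms_length)
    then have "MM w x = 0" using that by (simp add: MM_def)
    then show "of_nat (alpha p q u v w) * MM w x = 0" by simp
  qed
  fix y assume y: "y \<in> Perms ?N"
  let ?X = "{x\<in>Perms ?N. weak_le x y}"
  have finX: "finite ?X" using finite_Perms by simp
  have "(\<Sum>x\<in>?X. sprod p q (MM u) (MM v) x)
     = (\<Sum>u'\<in>Perms p. \<Sum>v'\<in>Perms q. \<Sum>z\<in>Shuf p q. \<Sum>x\<in>?X.
          if ?phi u' v' z = x then MM u u' * MM v v' else 0)"
    unfolding sprod_def by (rule swap4)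
  also have "\<dots> = (\<Sum>u'\<in>Perms p. \<Sum>v'\<in>Perms q. \<Sum>z\<in>Shuf p q.
          if weak_le (?phi u' v' z) y then MM u u' * MM v v' else 0)"
    using finX phiP by (intro sum.cong refl) auto
  also have "\<dots> = (\<Sum>z\<in>Shuf p q. \<Sum>u'\<in>Perms p. \<Sum>v'\<in>Perms q.
          if weak_le (?phi u' v' z) y then MM u u' * MM v v' else 0)"
    by (rule swap3)
  also have "\<dots> = (\<Sum>z\<in>Shuf p q. if Cz p q z y \<and> u = Y1 p z y \<and> v = Y2 p q z y then 1 else 0)"
    using perz[OF u v _ y] by (intro sum.cong refl) simp
  also have "\<dots> = of_nat (card {z \<in> Shuf p q. Cz p q z y \<and> u = Y1 p z y \<and> v = Y2 p q z y})"
    using finS by (simp add: sum.inter_filter[symmetric])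
  also have "\<dots> = of_nat (alpha p q u v y)"
    unfolding alpha_def using Aset_eq[OF u v y] by simp
  finally have L: "(\<Sum>x\<in>?X. sprod p q (MM u) (MM v) x) = of_nat (alpha p q u v y)" .
  have "(\<Sum>x\<in>?X. \<Sum>w\<in>Perms ?N. of_nat (alpha p q u v w) * MM w x)
      = (\<Sum>w\<in>Perms ?N. of_nat (alpha p q u v w) * (\<Sum>x\<in>?X. MM w x))"
    by (subst sum.swap) (simp add: sum_distrib_left)
  also have "\<dots> = (\<Sum>w\<in>Perms ?N. of_nat (alpha p q u v w) * (if w = y then 1 else 0))"
  proof (intro sum.cong refl)
    fix w assume w: "w \<in> Perms ?N"
    have "(\<Sum>x\<in>?X. MM w x) = (\<Sum>x\<in>Perms ?N. if weak_le x y then MM w x else 0)"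
      by (simp add: sum.inter_filter finite_Perms)
    also have "\<dots> = (if w = y then 1 else 0)" by (rule factor[OF w y])
    finally show "of_nat (alpha p q u v w) * (\<Sum>x\<in>?X. MM w x) = of_nat (alpha p q u v w) * (if w = y then 1 else 0)"
      by simp
  qed
  also have "\<dots> = (\<Sum>w\<in>Perms ?N. if w = y then of_nat (alpha p q u v w) else 0)"
    by (intro sum.cong refl) simp
  also have "\<dots> = of_nat (alpha p q u v y)" using y by (simp add: finite_Perms)
  finally show "(\<Sum>x\<in>?X. sprod p q (MM u) (MM v) x) = (\<Sum>x\<in>?X. \<Sum>w\<in>Perms ?N. of_nat (alpha p q u v w) * MM w x)"
    using L by simp
qed

end
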